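(* Let $\mathbf{F}=(f_{ij})$ be an $n\times n$ nonnegative matrix, $\vec z=(z_1,\dots,z_n)^{\mathrm T}$ a nonnegative column vector and $\vec y=(y_1,\dots,y_n)$ a nonnegative row vector. Define $T^{\mathrm{in}}_i=\sum_{j} f_{ij}+z_i$ and $T^{\mathrm{out}}_j=\sum_{i} f_{ij}+y_j$, assume all are positive, and assume steady state: $T^{\mathrm{in}}_\ell=T^{\mathrm{out}}_\ell$ for all $\ell$. Let $\mathbf G=(g_{ij})$ with $g_{ij}=f_{ij}/T^{\mathrm{out}}_j$ and $\mathbf G'=(g'_{ij})$ with $g'_{ij}=f_{ij}/T^{\mathrm{in}}_i$. Then for each integer $m\ge0$, $$\sum_{i=1}^n(\mathbf G^m\vec z)_i=\sum_{i=1}^n(\vec y\mathbf G'^m)_i.$$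
   Context: $f_{ij}$ is the flow from node $j$ to node $i$, $z_i$ the boundary input to node $i$, $y_j$ the boundary output from node $j$. $\mathbf G^0=\mathbf G'^0$ is the identity matrix. *)

theory Defs
  imports "HOL-Analysis.Analysis"
begin

primrec matpow :: "'a::semiring_1^'n^'n \<Rightarrow> nat \<Rightarrow> 'a^'n^'n" where
  "matpow A 0 = mat 1"
| "matpow A (Suc m) = A ** matpow A m"

end

theory Submission
  imports Defs
begin

lemma matpow_comm: "matpow A m ** A = A ** matpow A m"
  by (induction m) (simp_all add: matrix_mul_assoc[symmetric])

lemma sum_vm: "(\<Sum>i\<in>UNIV. (t v* M) $ i) = (\<Sum>i\<in>UNIV. (t::real^'n) $ i * (M *v (\<chi> j. 1)) $ i)"
  unfolding vector_matrix_mult_def matrix_vector_mult_def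
  by (simp add: sum_distrib_left) (rule sum.swap)

theorem lemma2:
  fixes F :: "real^'n^'n" and z :: "real^'n" and y :: "real^'n"
    and Tin Tout :: "'n \<Rightarrow> real" and G G' :: "real^'n^'n" and m :: nat
  assumes F_nonneg: "\<And>i j. F $ i $ j \<ge> 0"
    and z_nonneg: "\<And>i. z $ i \<ge> 0"
    and y_nonneg: "\<And>j. y $ j \<ge> 0"
    and Tin_def: "\<And>i. Tin i = (\<Sum>j\<in>UNIV. F $ i $ j) + z $ i"
    and Tout_def: "\<And>j. Tout j = (\<Sum>i\<in>UNIV. F $ i $ j) + y $ j"
    and Tin_pos: "\<And>i. Tin i > 0"
    and Tout_pos: "\<And>j. Tout j > 0"
    and steady: "\<And>l. Tin l = Tout l"
    and G_def: "G = (\<chi> i j. F $ i $ j / Tout j)"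
    and G'_def: "G' = (\<chi> i j. F $ i $ j / Tin i)"
  shows "(\<Sum>i\<in>UNIV. (matpow G m *v z) $ i) = (\<Sum>i\<in>UNIV. (y v* matpow G' m) $ i)"
proof -
  define t :: "real^'n" where "t = (\<chi> i. Tout i)"
  have ne: "\<And>i. Tout i \<noteq> 0" using Tout_pos by (metis less_irrefl)
  have Gt: "G *v t = t - z"
  proof -
    have "(G *v t) $ i = t $ i - z $ i" for i
    proof -
      have "(G *v t) $ i = (\<Sum>j\<in>UNIV. F $ i $ j)"
        unfolding matrix_vector_mult_def G_def t_def using ne by simp
      then show ?thesis using Tin_def[of i] steady[of i] t_def by simp
    qed
    then show ?thesis by (simp add: vec_eq_iff)
  qed
  have tG: "t v* G' = t - y"
  proof -
    have "(t v* G') $ j = t $ j - y $ j" for j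
    proof -
      have "(t v* G') $ j = (\<Sum>i\<in>UNIV. F $ i $ j)"
        unfolding vector_matrix_mult_def G'_def t_def using ne steady by simp
      then show ?thesis using Tout_def[of j] t_def by simp
    qed
    then show ?thesis by (simp add: vec_eq_iff)
  qed
  have key: "(matpow G k *v (\<chi> i. Tout i * x $ i)) $ i = Tout i * (matpow G' k *v x) $ i"
    for k and x :: "real^'n" and i
  proof (induction k arbitrary: i)
    case 0
    then show ?case by simp
  next
    case (Suc k)
    have "(matpow G (Suc k) *v (\<chi> i. Tout i * x $ i)) $ i
        = (G *v (matpow G k *v (\<chi> i. Tout i * x $ i))) $ i"
      by (simp add: matrix_vector_mul_assoc)
    also have "\<dots> = (\<Sum>j\<in>UNIV. F $ i $ j / Tout j * (Tout j * (matpow G' k *v x) $ j))"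
    proof -
      have "(G *v w) $ i = (\<Sum>j\<in>UNIV. F $ i $ j / Tout j * w $ j)" for w :: "real^'n"
        by (simp add: G_def matrix_vector_mult_def)
      then show ?thesis using Suc by simp
    qed
    also have "\<dots> = (\<Sum>j\<in>UNIV. F $ i $ j * (matpow G' k *v x) $ j)"
      using ne by simp
    also have "\<dots> = Tout i * (\<Sum>j\<in>UNIV. F $ i $ j / Tin i * (matpow G' k *v x) $ j)"
      using ne steady by (simp add: sum_distrib_left)
    also have "\<dots> = Tout i * (G' *v (matpow G' k *v x)) $ i"
    proof -
      have "(G' *v w) $ i = (\<Sum>j\<in>UNIV. F $ i $ j / Tin i * w $ j)" for w :: "real^'n"
        by (simp add: G'_def matrix_vector_mult_def)
      then show ?thesis by simp
    qed
    also have "\<dots> = Tout i * (matpow G' (Suc k) *v x) $ i"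
      by (simp add: matrix_vector_mul_assoc)
    finally show ?case .
  qed
  have s: "(\<Sum>i\<in>UNIV. (matpow G k *v t) $ i) = (\<Sum>i\<in>UNIV. (t v* matpow G' k) $ i)" for k
  proof -
    have "(matpow G k *v t) $ i = Tout i * (matpow G' k *v (\<chi> j. 1)) $ i" for i
      using key[of k "\<chi> j. 1" i] by (simp add: t_def)
    then have "(\<Sum>i\<in>UNIV. (matpow G k *v t) $ i)
        = (\<Sum>i\<in>UNIV. Tout i * (matpow G' k *v (\<chi> j. 1)) $ i)"
      by simp
    also have "\<dots> = (\<Sum>i\<in>UNIV. (t v* matpow G' k) $ i)"
      by (simp add: sum_vm t_def)
    finally show ?thesis .
  qed
  have z_eq: "z = t - G *v t" using Gt by simp
  have y_eq: "y = t - t v* G'" using tG by simp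
  have "matpow G m *v z = matpow G m *v t - matpow G (Suc m) *v t"
    by (simp add: z_eq matrix_vector_mult_diff_distrib matrix_vector_mul_assoc matpow_comm)
  moreover have "y v* matpow G' m = t v* matpow G' m - t v* matpow G' (Suc m)"
    by (simp add: y_eq vector_matrix_mult_diff_distrib vector_matrix_mul_assoc)
  ultimately show ?thesis
    using s[of m] s[of "Suc m"] by (simp add: sum_subtractf)
qed

end
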